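(* Let $K$ be a field and $\nu$ a valuation on $K[x]$. If $\mathbf{Q}\subseteq K[x]$ is a complete set for $\nu$ (not necessarily consisting of key polynomials), then $\mathbf{Q}$ satisfies (GS1$^*$).
   Context: $\nu:K[x]\to\Gamma\cup\{\infty\}$ is a valuation ($\Gamma$ an ordered abelian group) with $\nu(f)=\infty$ only for $f=0$. For monic nonconstant $Q$, the $Q$-expansion of $f$ is the unique expression $f=f_0+f_1Q+\dots+f_nQ^n$ with each $f_i=0$ or $\deg f_i<\deg Q$, and $\nu_Q(f)=\min_i\nu(f_iQ^i)$. A set $\mathbf{Q}$ of monic nonconstant polynomials is complete for $\nu$ if for every nonconstant $f\in K[x]$ there is $Q\in\mathbf{Q}$ with $\deg Q\le\deg f$ and $\nu_Q(f)=\nu(f)$. For finitely supported $\lambda:\mathbf{Q}\to\mathbb{N}_0$ let $\mathbf{Q}^\lambda=\prod_{\lambda(Q)\neq0}Q^{\lambda(Q)}$. (GS1$^*$): for every $f\in K[x]$ there exist $r\ge0$, $a_1,\dots,a_r\in K$ and finitely supported $\lambda_1,\dots,\lambda_r:\mathbf{Q}\to\mathbb{N}_0$ with $f=\sum_{i=1}^ra_i\mathbf{Q}^{\lambda_i}$, $\nu(a_i\mathbf{Q}^{\lambda_i})\ge\nu(f)$ for all $i$, and $\deg Q\le\deg f$ whenever $\lambda_i(Q)\ne0$ for some $i$. *)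

theory Defs
  imports "HOL-Computational_Algebra.Polynomial" "HOL-Library.Extended"
begin

text \<open>A valuation on K[x] with values in an ordered abelian group 'g together with
  infinity: values live in 'g extended (Fin g, or Pinf = infinity); Minf is never taken.\<close>
definition is_valuation :: "('a::field poly \<Rightarrow> 'g::linordered_ab_group_add extended) \<Rightarrow> bool" where
  "is_valuation \<nu> \<longleftrightarrow>
     (\<forall>f. \<nu> f \<noteq> Minf) \<and>
     (\<forall>f. \<nu> f = Pinf \<longleftrightarrow> f = 0) \<and>
     (\<forall>f g. \<nu> (f * g) = \<nu> f + \<nu> g) \<and>
     (\<forall>f g. min (\<nu> f) (\<nu> g) \<le> \<nu> (f + g))"

definition qexp :: "'a::field poly \<Rightarrow> 'a poly \<Rightarrow> nat \<Rightarrow> 'a poly" where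
  "qexp Q f = (THE c. finite {i. c i \<noteq> 0} \<and>
                      (\<forall>i. c i = 0 \<or> degree (c i) < degree Q) \<and>
                      f = (\<Sum>i\<in>{i. c i \<noteq> 0}. c i * Q ^ i))"

definition nuQ :: "('a::field poly \<Rightarrow> 'g::linordered_ab_group_add extended) \<Rightarrow> 'a poly \<Rightarrow> 'a poly \<Rightarrow> 'g extended" where
  "nuQ \<nu> Q f = (if {i. qexp Q f i \<noteq> 0} = {} then Pinf
                 else Min ((\<lambda>i. \<nu> (qexp Q f i * Q ^ i)) ` {i. qexp Q f i \<noteq> 0}))"

definition complete_set :: "('a::field poly \<Rightarrow> 'g::linordered_ab_group_add extended) \<Rightarrow> 'a poly set \<Rightarrow> bool" where
  "complete_set \<nu> QS \<longleftrightarrow>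
     (\<forall>f. degree f \<ge> 1 \<longrightarrow> (\<exists>Q\<in>QS. degree Q \<le> degree f \<and> nuQ \<nu> Q f = \<nu> f))"

definition qpow :: "('a::field poly \<Rightarrow> nat) \<Rightarrow> 'a poly" where
  "qpow lam = (\<Prod>Q\<in>{Q. lam Q \<noteq> 0}. Q ^ lam Q)"

definition GS1_star :: "('a::field poly \<Rightarrow> 'g::linordered_ab_group_add extended) \<Rightarrow> 'a poly set \<Rightarrow> bool" where
  "GS1_star \<nu> QS \<longleftrightarrow>
     (\<forall>f. \<exists>(r::nat) (a::nat \<Rightarrow> 'a) (lam::nat \<Rightarrow> 'a poly \<Rightarrow> nat).
        (\<forall>i\<in>{1..r}. finite {Q. lam i Q \<noteq> 0} \<and> {Q. lam i Q \<noteq> 0} \<subseteq> QS) \<and>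
        f = (\<Sum>i=1..r. smult (a i) (qpow (lam i))) \<and>
        (\<forall>i\<in>{1..r}. \<nu> (smult (a i) (qpow (lam i))) \<ge> \<nu> f) \<and>
        (\<forall>i\<in>{1..r}. \<forall>Q. lam i Q \<noteq> 0 \<longrightarrow> degree Q \<le> degree f))"

end

theory Submission
  imports Defs
begin

fun qx :: "'a::field poly \<Rightarrow> 'a poly \<Rightarrow> nat \<Rightarrow> 'a poly" where
  "qx Q f 0 = f mod Q"
| "qx Q f (Suc i) = qx Q (f div Q) i"

lemma qx_zero: "qx Q 0 i = 0"
  by (induction i) auto

lemma qx_mod: "\<exists>g. qx Q f i = g mod Q"
  by (induction i arbitrary: f) auto

lemma qx_deg: "degree Q \<ge> 1 \<Longrightarrow> qx Q f i = 0 \<or> degree (qx Q f i) < degree Q"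
  using qx_mod[of Q f i] degree_mod_less by (metis degree_0 not_one_le_zero)

lemma qx_vanish: "degree Q \<ge> 1 \<Longrightarrow> degree f < i \<Longrightarrow> qx Q f i = 0"
proof (induction i arbitrary: f)
  case 0 then show ?case by simp
next
  case (Suc j)
  show ?case
  proof (cases "degree f = 0")
    case True
    then have "f div Q = 0" using Suc.prems by (intro div_poly_less) simp
    then show ?thesis by (simp add: qx_zero)
  next
    case False
    then have "degree (f div Q) < degree f" using Suc.prems by (intro degree_div_less) auto
    then show ?thesis using Suc by simp
  qed
qed

lemma qx_sum: "degree Q \<ge> 1 \<Longrightarrow> degree f < N \<Longrightarrow> f = (\<Sum>i<N. qx Q f i * Q ^ i)"
proof (induction N arbitrary: f)
  case 0 then show ?case by simp
next
  case (Suc M)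
  have s: "(\<Sum>i<Suc M. qx Q f i * Q ^ i) = f mod Q + Q * (\<Sum>i<M. qx Q (f div Q) i * Q ^ i)"
    by (simp add: sum.lessThan_Suc_shift sum_distrib_left mult_ac del: sum.lessThan_Suc)
  have "f div Q = (\<Sum>i<M. qx Q (f div Q) i * Q ^ i)"
  proof (cases "f div Q = 0")
    case True then show ?thesis by (simp add: qx_zero)
  next
    case False
    have "degree f \<noteq> 0"
    proof
      assume "degree f = 0"
      then have "degree f < degree Q" using Suc.prems by simp
      then show False using False div_poly_less by blast
    qed
    then have "degree (f div Q) < degree f" using Suc.prems by (intro degree_div_less) auto
    then show ?thesis using Suc by simp
  qed
  then have "(\<Sum>i<Suc M. qx Q f i * Q ^ i) = f mod Q + Q * (f div Q)" using s by simp
  also have "\<dots> = f" using mult_div_mod_eq[of Q f] by (simp add: add.commute)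
  finally show ?case by simp
qed

lemma qx_unique:
  assumes "degree Q \<ge> 1" "\<forall>j. c j = 0 \<or> degree (c j) < degree Q" "\<forall>j\<ge>N. c j = 0"
  shows "qx Q (\<Sum>j<N. c j * Q ^ j) i = c i"
  using assms(2,3)
proof (induction N arbitrary: c i)
  case 0 then show ?case by (simp add: qx_zero)
next
  case (Suc M)
  have "(\<Sum>j<Suc M. c j * Q ^ j) = c 0 * Q ^ 0 + (\<Sum>j<M. c (Suc j) * Q ^ (Suc j))"
    by (rule sum.lessThan_Suc_shift)
  also have "\<dots> = c 0 + (\<Sum>j<M. c (Suc j) * Q ^ j * Q)"
    by (simp add: power_commutes mult.assoc)
  finally have s: "(\<Sum>j<Suc M. c j * Q ^ j) = c 0 + (\<Sum>j<M. c (Suc j) * Q ^ j) * Q"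
    by (simp add: sum_distrib_right)
  have Q0: "Q \<noteq> 0" using assms(1) by auto
  have m: "c 0 mod Q = c 0" using Suc.prems(1) by (metis mod_0 mod_poly_less)
  have d: "c 0 div Q = 0" using Suc.prems(1) by (metis div_0 div_poly_less)
  show ?case
  proof (cases i)
    case 0 then show ?thesis using s m by (simp add: mod_mult_self2)
  next
    case (Suc k)
    have "(\<Sum>j<Suc M. c j * Q ^ j) div Q = (\<Sum>j<M. c (Suc j) * Q ^ j)"
      using s d Q0 by (simp add: div_mult_self2)
    moreover have "qx Q (\<Sum>j<M. c (Suc j) * Q ^ j) k = c (Suc k)"
      using Suc.IH[of "\<lambda>j. c (Suc j)" k] Suc.prems by auto
    ultimately show ?thesis using Suc by simp
  qed
qed


lemma qx_props:
  assumes Q: "degree Q \<ge> 1"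
  shows "finite {i. qx Q f i \<noteq> 0} \<and>
    (\<forall>i. qx Q f i = 0 \<or> degree (qx Q f i) < degree Q) \<and>
    f = (\<Sum>i\<in>{i. qx Q f i \<noteq> 0}. qx Q f i * Q ^ i)"
proof -
  have sub: "{i. qx Q f i \<noteq> 0} \<subseteq> {..<Suc (degree f)}"
    using qx_vanish[OF Q] by (auto simp: not_less_eq[symmetric])
  show ?thesis
  proof (intro conjI allI)
    show "finite {i. qx Q f i \<noteq> 0}" using sub finite_subset by blast
    show "qx Q f i = 0 \<or> degree (qx Q f i) < degree Q" for i using qx_deg[OF Q] .
    have "f = (\<Sum>i<Suc (degree f). qx Q f i * Q ^ i)" by (rule qx_sum[OF Q]) simp
    also have "\<dots> = (\<Sum>i\<in>{i. qx Q f i \<noteq> 0}. qx Q f i * Q ^ i)"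
      by (rule sum.mono_neutral_right) (use sub in auto)
    finally show "f = (\<Sum>i\<in>{i. qx Q f i \<noteq> 0}. qx Q f i * Q ^ i)" .
  qed
qed

lemma qexp_eq:
  assumes Q: "degree Q \<ge> 1"
  shows "qexp Q f = qx Q f"
  unfolding qexp_def
proof (rule the_equality)
  show "finite {i. qx Q f i \<noteq> 0} \<and>
    (\<forall>i. qx Q f i = 0 \<or> degree (qx Q f i) < degree Q) \<and>
    f = (\<Sum>i\<in>{i. qx Q f i \<noteq> 0}. qx Q f i * Q ^ i)" by (rule qx_props[OF Q])
next
  fix c assume c: "finite {i. c i \<noteq> 0} \<and>
    (\<forall>i. c i = 0 \<or> degree (c i) < degree Q) \<and>
    f = (\<Sum>i\<in>{i. c i \<noteq> 0}. c i * Q ^ i)"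
  then obtain N where N: "{i. c i \<noteq> 0} \<subseteq> {..<N}" using finite_nat_bounded by blast
  have "f = (\<Sum>i\<in>{i. c i \<noteq> 0}. c i * Q ^ i)" using c by blast
  also have "\<dots> = (\<Sum>i<N. c i * Q ^ i)"
    by (rule sum.mono_neutral_left) (use N in auto)
  finally have f: "f = (\<Sum>i<N. c i * Q ^ i)" .
  have N': "\<forall>j\<ge>N. c j = 0" using N by auto
  show "c = qx Q f"
    by (rule ext) (use qx_unique[OF Q _ N'] c f in auto)
qed


lemma qpow_upd:
  assumes fin: "finite {R. l R \<noteq> 0}"
  shows "qpow (l(Q := l Q + i)) = qpow l * Q ^ i"
proof (cases "i = 0")
  case True then show ?thesis by simp
next
  case False
  let ?S = "{R. l R \<noteq> 0}"
  let ?l = "l(Q := l Q + i)"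
  have S': "{R. ?l R \<noteq> 0} = insert Q ?S" using False by auto
  have cong: "(\<Prod>R\<in>?S - {Q}. R ^ ?l R) = (\<Prod>R\<in>?S - {Q}. R ^ l R)"
    by (rule prod.cong) auto
  show ?thesis
  proof (cases "Q \<in> ?S")
    case True
    then have ins: "insert Q ?S = ?S" by blast
    have "qpow ?l = Q ^ (l Q + i) * (\<Prod>R\<in>?S - {Q}. R ^ ?l R)"
      unfolding qpow_def S' ins using prod.remove[OF fin True, of "\<lambda>R. R ^ ?l R"] by simp
    moreover have "qpow l = Q ^ l Q * (\<Prod>R\<in>?S - {Q}. R ^ l R)"
      unfolding qpow_def using prod.remove[OF fin True, of "\<lambda>R. R ^ l R"] by simp
    ultimately show ?thesis using cong by (simp add: power_add mult_ac)
  next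
    case False
    have "qpow ?l = Q ^ ?l Q * (\<Prod>R\<in>?S. R ^ ?l R)"
      unfolding qpow_def S' by (rule prod.insert[OF fin False])
    moreover have "(\<Prod>R\<in>?S. R ^ ?l R) = qpow l"
      unfolding qpow_def using False by (intro prod.cong) auto
    ultimately show ?thesis using False by (simp add: mult_ac)
  qed
qed

lemma sum_list_map_concat: "sum_list (map g (concat xss)) = sum_list (map (\<lambda>xs. sum_list (map g xs)) xss)"
  by (induction xss) auto


definition good :: "('a::field poly \<Rightarrow> 'g::linordered_ab_group_add extended) \<Rightarrow> 'a poly set \<Rightarrow> 'a poly \<Rightarrow> ('a \<times> ('a poly \<Rightarrow> nat)) list \<Rightarrow> bool" where
  "good \<nu> QS f xs \<longleftrightarrow>
    (\<forall>p\<in>set xs. finite {R. snd p R \<noteq> 0} \<and> {R. snd p R \<noteq> 0} \<subseteq> QS \<and>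
        \<nu> f \<le> \<nu> (smult (fst p) (qpow (snd p))) \<and> (\<forall>R. snd p R \<noteq> 0 \<longrightarrow> degree R \<le> degree f)) \<and>
    f = sum_list (map (\<lambda>p. smult (fst p) (qpow (snd p))) xs)"

lemma main_good:
  fixes \<nu> :: "'a::field poly \<Rightarrow> 'g::linordered_ab_group_add extended"
    and QS :: "'a poly set"
  assumes val: "is_valuation \<nu>"
    and QS: "\<forall>Q\<in>QS. lead_coeff Q = 1 \<and> degree Q \<ge> 1"
    and cs: "complete_set \<nu> QS"
  shows "\<exists>xs. good \<nu> QS f xs"
proof (induction "degree f" arbitrary: f rule: less_induct)
  case less
  show ?case
  proof (cases "degree f = 0")
    case True
    have "good \<nu> QS f [(coeff f 0, \<lambda>_. 0)]"
    proof -
      have q0: "qpow (\<lambda>_::'a poly. 0::nat) = 1" by (simp add: qpow_def)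
      show ?thesis unfolding good_def by (simp add: q0 degree_0_id[OF True])
    qed
    then show ?thesis by blast
  next
    case False
    then obtain Q where Q: "Q \<in> QS" "degree Q \<le> degree f" "nuQ \<nu> Q f = \<nu> f"
    proof -
      have "degree f \<ge> 1" using False by simp
      then show ?thesis using that cs unfolding complete_set_def by blast
    qed
    have mult: "\<And>a b. \<nu> (a * b) = \<nu> a + \<nu> b" using val unfolding is_valuation_def by blast
    have dQ: "degree Q \<ge> 1" using QS Q by blast
    define c where "c = qx Q f"
    define S where "S = {i. c i \<noteq> 0}"
    have ce: "qexp Q f = c" using qexp_eq[OF dQ] c_def by simp
    have finS: "finite S" and cdeg: "\<And>i. c i = 0 \<or> degree (c i) < degree Q"
      and fsum: "f = (\<Sum>i\<in>S. c i * Q ^ i)"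
      using qx_props[OF dQ, of f] unfolding c_def S_def by blast+
    have nu_le: "\<nu> f \<le> \<nu> (c i * Q ^ i)" if "i \<in> S" for i
    proof -
      have "S \<noteq> {}" using that by blast
      then have "nuQ \<nu> Q f = Min ((\<lambda>i. \<nu> (c i * Q ^ i)) ` S)"
        unfolding nuQ_def ce S_def by auto
      also have "\<dots> \<le> \<nu> (c i * Q ^ i)" using finS that by (intro Min_le) auto
      finally show ?thesis using Q by simp
    qed
    have "\<exists>xs. good \<nu> QS (c i) xs" if "i \<in> S" for i
    proof -
      have "c i \<noteq> 0" using that unfolding S_def by blast
      then have "degree (c i) < degree f" using cdeg[of i] Q(2) by linarith
      then show ?thesis using less by blast
    qed
    then have "\<forall>i\<in>S. \<exists>xs. good \<nu> QS (c i) xs" by blast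
    then obtain X where X: "\<And>i. i \<in> S \<Longrightarrow> good \<nu> QS (c i) (X i)" by (metis bchoice)
    define sh where "sh = (\<lambda>i (p :: 'a \<times> ('a poly \<Rightarrow> nat)). (fst p, (snd p)(Q := snd p Q + i)))"
    define g where "g = (\<lambda>p :: 'a \<times> ('a poly \<Rightarrow> nat). smult (fst p) (qpow (snd p)))"
    define L where "L = concat (map (\<lambda>i. map (sh i) (X i)) (sorted_list_of_set S))"
    have gsh: "g (sh i p) = g p * Q ^ i" if "finite {R. snd p R \<noteq> 0}" for i p
      unfolding g_def sh_def using qpow_upd[OF that] by (simp add: mult_smult_left)
    have "good \<nu> QS f L"
      unfolding good_def
    proof (intro conjI ballI)
      fix p' assume "p' \<in> set L"
      then obtain i p where i: "i \<in> S" and p: "p \<in> set (X i)" and p': "p' = sh i p"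
        unfolding L_def using finS by (auto simp: set_concat)
      have gp: "finite {R. snd p R \<noteq> 0} \<and> {R. snd p R \<noteq> 0} \<subseteq> QS \<and>
        \<nu> (c i) \<le> \<nu> (smult (fst p) (qpow (snd p))) \<and> (\<forall>R. snd p R \<noteq> 0 \<longrightarrow> degree R \<le> degree (c i))"
        using X[OF i] p unfolding good_def by blast
      have sup: "{R. snd p' R \<noteq> 0} \<subseteq> insert Q {R. snd p R \<noteq> 0}"
        unfolding p' sh_def by auto
      show "finite {R. snd p' R \<noteq> 0}" using sup gp finite_subset by blast
      show "{R. snd p' R \<noteq> 0} \<subseteq> QS" using sup gp Q(1) by blast
      have ci: "degree (c i) < degree Q" using cdeg[of i] i unfolding S_def by auto
      show "\<forall>R. snd p' R \<noteq> 0 \<longrightarrow> degree R \<le> degree f"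
      proof (intro allI impI)
        fix R assume "snd p' R \<noteq> 0"
        then have "R = Q \<or> snd p R \<noteq> 0" using sup by blast
        then show "degree R \<le> degree f"
        proof
          assume "snd p R \<noteq> 0"
          then have "degree R \<le> degree (c i)" using gp by blast
          then show ?thesis using ci Q(2) by linarith
        qed (use Q(2) in simp)
      qed
      have "\<nu> f \<le> \<nu> (c i * Q ^ i)" using nu_le[OF i] .
      also have "\<dots> = \<nu> (c i) + \<nu> (Q ^ i)" by (rule mult)
      also have "\<dots> \<le> \<nu> (g p) + \<nu> (Q ^ i)" using gp unfolding g_def by (intro add_right_mono) blast
      also have "\<dots> = \<nu> (g p * Q ^ i)" by (rule mult[symmetric])
      also have "\<dots> = \<nu> (g p')" using gsh gp p' by simp
      finally show "\<nu> f \<le> \<nu> (smult (fst p') (qpow (snd p')))" unfolding g_def .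
    next
      have "sum_list (map g L) = sum_list (map (\<lambda>i. sum_list (map g (map (sh i) (X i)))) (sorted_list_of_set S))"
        unfolding L_def sum_list_map_concat by (simp add: o_def)
      also have "\<dots> = sum_list (map (\<lambda>i. c i * Q ^ i) (sorted_list_of_set S))"
      proof (rule arg_cong[where f=sum_list], rule map_cong[OF refl])
        fix i assume "i \<in> set (sorted_list_of_set S)"
        then have i: "i \<in> S" using finS by simp
        have "sum_list (map g (map (sh i) (X i))) = sum_list (map (\<lambda>p. g p * Q ^ i) (X i))"
        proof -
          have "map (g \<circ> sh i) (X i) = map (\<lambda>p. g p * Q ^ i) (X i)"
          proof (rule map_cong[OF refl])
            fix p assume "p \<in> set (X i)"
            then have "finite {R. snd p R \<noteq> 0}" using X[OF i] unfolding good_def by blast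
            then show "(g \<circ> sh i) p = g p * Q ^ i" using gsh by simp
          qed
          then show ?thesis by (simp only: map_map)
        qed
        also have "\<dots> = sum_list (map g (X i)) * Q ^ i" by (rule sum_list_mult_const)
        also have "\<dots> = c i * Q ^ i" using X[OF i] unfolding good_def g_def by simp
        finally show "sum_list (map g (map (sh i) (X i))) = c i * Q ^ i" .
      qed
      also have "\<dots> = (\<Sum>i\<in>S. c i * Q ^ i)"
        using finS by (simp add: sum_list_distinct_conv_sum_set)
      finally show "f = sum_list (map (\<lambda>p. smult (fst p) (qpow (snd p))) L)"
        using fsum unfolding g_def by simp
    qed
    then show ?thesis by blast
  qed
qed


lemma sum_shift1:
  fixes n :: nat
  shows "(\<Sum>i=1..n. F (i - 1)) = (\<Sum>i<n. (F i :: 'b::comm_monoid_add))"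
  by (induction n) (auto simp: sum.cl_ivl_Suc)

theorem proposition5p2:
  fixes \<nu> :: "'a::field poly \<Rightarrow> 'g::linordered_ab_group_add extended"
    and QS :: "'a poly set"
  assumes "is_valuation \<nu>"
    and "\<forall>Q\<in>QS. lead_coeff Q = 1 \<and> degree Q \<ge> 1"
    and "complete_set \<nu> QS"
  shows "GS1_star \<nu> QS"
  unfolding GS1_star_def
proof
  fix f
  obtain xs where xs: "good \<nu> QS f xs" using main_good[OF assms] by blast
  define a where "a = (\<lambda>i. fst (xs ! (i - 1)))"
  define lam where "lam = (\<lambda>i. snd (xs ! (i - 1)))"
  have mem: "xs ! (i - 1) \<in> set xs" if "i \<in> {1..length xs}" for i
    using that by auto
  have P: "\<forall>p\<in>set xs. finite {R. snd p R \<noteq> 0} \<and> {R. snd p R \<noteq> 0} \<subseteq> QS \<and>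
        \<nu> f \<le> \<nu> (smult (fst p) (qpow (snd p))) \<and> (\<forall>R. snd p R \<noteq> 0 \<longrightarrow> degree R \<le> degree f)"
    and F: "f = sum_list (map (\<lambda>p. smult (fst p) (qpow (snd p))) xs)"
    using xs unfolding good_def by blast+
  have "f = (\<Sum>i<length xs. smult (fst (xs ! i)) (qpow (snd (xs ! i))))"
    using F by (simp add: sum_list_sum_nth atLeast0LessThan)
  also have "\<dots> = (\<Sum>i=1..length xs. smult (a i) (qpow (lam i)))"
    unfolding a_def lam_def by (rule sum_shift1[symmetric])
  finally have F': "f = (\<Sum>i=1..length xs. smult (a i) (qpow (lam i)))" .
  show "\<exists>(r::nat) (a::nat \<Rightarrow> 'a) (lam::nat \<Rightarrow> 'a poly \<Rightarrow> nat).
        (\<forall>i\<in>{1..r}. finite {Q. lam i Q \<noteq> 0} \<and> {Q. lam i Q \<noteq> 0} \<subseteq> QS) \<and>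
        f = (\<Sum>i=1..r. smult (a i) (qpow (lam i))) \<and>
        (\<forall>i\<in>{1..r}. \<nu> (smult (a i) (qpow (lam i))) \<ge> \<nu> f) \<and>
        (\<forall>i\<in>{1..r}. \<forall>Q. lam i Q \<noteq> 0 \<longrightarrow> degree Q \<le> degree f)"
  proof (intro exI conjI ballI allI impI)
    show "f = (\<Sum>i=1..length xs. smult (a i) (qpow (lam i)))" by (rule F')
  next
    fix i assume i: "i \<in> {1..length xs}"
    note Pi = P[rule_format, OF mem[OF i]]
    show "finite {Q. lam i Q \<noteq> 0}" using Pi unfolding lam_def by blast
    show "{Q. lam i Q \<noteq> 0} \<subseteq> QS" using Pi unfolding lam_def by blast
    show "\<nu> (smult (a i) (qpow (lam i))) \<ge> \<nu> f" using Pi unfolding lam_def a_def by blast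
    fix Q assume "lam i Q \<noteq> 0"
    then show "degree Q \<le> degree f" using Pi unfolding lam_def by blast
  qed
qed

end
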